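(* There exists a positive integer $d_0$ such that the following holds for all $d \geq d_0$. Let $0 < \epsilon \leq \frac{5}{8}$, and let $2^{18} \leq d' \leq d$. Let $n$ be a positive even integer, and let $H = (X \cup Y, E)$ be a balanced bipartite graph on $[n]$ with parts $X,Y$ satisfying $\frac{d}{2}-d^{2/3}\leq\deg_H(v) \leq \frac{d}{2} + d^{2/3}$ for every $v \in [n]$. Let $G_X$ be a graph on $X$ satisfying $(1-\epsilon)d'\leq\deg_{G_X}(x) \leq (1 + \epsilon)d'$ for every $x \in X$. Then there exists a bipartition $\{X', X''\}$ of $X$ such that: (L1) the graph $H_X := G_X[X', X'']$ satisfies $$\left(1 - \frac{2}{(d')^{1/3}}\right)\frac{\deg_{G_X}(x)}{2}\leq\deg_{H_X}(x) \leq \left(1 + \frac{2}{(d')^{1/3}}\right)\frac{\deg_{G_X}(x)}{2}$$ for every $x \in X$; (L2) $\{X', X''\}$ is $\frac{d}{5}$-good with respect to $H$.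
   Context: A balanced bipartite graph $H=(X\cup Y,E)$ is a bipartite graph with parts $X,Y$, $|X|=|Y|$. For disjoint sets $X',X''$, $G_X[X',X'']$ denotes the bipartite subgraph (on vertex set $X'\cup X''$) of all edges of $G_X$ with one endpoint in $X'$ and the other in $X''$. Definition ($d$-good bipartition): let $H=(X\cup Y,E)$ be a balanced bipartite graph on $[n]$ and $d>0$. A bipartition $\{X',X''\}$ of $X$ is $d$-good with respect to $H$ if (G1) $\big||X'|-|X''|\big|\leq 1$, and (G2) $|N_H(y)\cap X'|\geq d$ and $|N_H(y)\cap X''|\geq d$ for every $y\in Y$. A $d$-good bipartition of $Y$ with respect to $H$ is defined analogously with the roles of $X$ and $Y$ swapped. *)

theory Defs
  imports Complex_Main
begin

definition simple_graph_on :: "nat set \<Rightarrow> (nat \<Rightarrow> nat \<Rightarrow> bool) \<Rightarrow> bool" where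
  "simple_graph_on V E \<longleftrightarrow> finite V \<and> (\<forall>u v. E u v \<longrightarrow> E v u) \<and> (\<forall>u. \<not> E u u)
     \<and> (\<forall>u v. E u v \<longrightarrow> u \<in> V \<and> v \<in> V)"

definition nbhd :: "(nat \<Rightarrow> nat \<Rightarrow> bool) \<Rightarrow> nat \<Rightarrow> nat set" where
  "nbhd E v = {u. E v u}"

definition deg :: "(nat \<Rightarrow> nat \<Rightarrow> bool) \<Rightarrow> nat \<Rightarrow> nat" where
  "deg E v = card (nbhd E v)"

definition balanced_bipartite_on :: "nat \<Rightarrow> nat set \<Rightarrow> nat set \<Rightarrow> (nat \<Rightarrow> nat \<Rightarrow> bool) \<Rightarrow> bool" where
  "balanced_bipartite_on n X Y E \<longleftrightarrow> simple_graph_on {1..n} E \<and> X \<union> Y = {1..n} \<and> X \<inter> Y = {}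
     \<and> card X = card Y \<and> (\<forall>u v. E u v \<longrightarrow> (u \<in> X \<and> v \<in> Y) \<or> (u \<in> Y \<and> v \<in> X))"

definition bip_sub :: "(nat \<Rightarrow> nat \<Rightarrow> bool) \<Rightarrow> nat set \<Rightarrow> nat set \<Rightarrow> nat \<Rightarrow> nat \<Rightarrow> bool" where
  "bip_sub E A B = (\<lambda>u v. E u v \<and> ((u \<in> A \<and> v \<in> B) \<or> (u \<in> B \<and> v \<in> A)))"

definition d_good :: "real \<Rightarrow> nat set \<Rightarrow> (nat \<Rightarrow> nat \<Rightarrow> bool) \<Rightarrow> nat set \<Rightarrow> nat set \<Rightarrow> bool" where
  "d_good d Y H X' X'' \<longleftrightarrow>
     \<bar>int (card X') - int (card X'')\<bar> \<le> 1 \<and>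
     (\<forall>y \<in> Y. real (card (nbhd H y \<inter> X')) \<ge> d \<and> real (card (nbhd H y \<inter> X'')) \<ge> d)"

end

theory Submission
  imports Defs "HOL-Probability.Hoeffding"
begin

lemma cosh_le_exp_sq:
  fixes a :: real
  shows "(exp a + exp (-a)) / 2 \<le> exp (a^2/2)"
proof -
  have main: "(exp a + exp (-a)) / 2 \<le> exp (a^2/2)" if "a \<ge> 0" for a :: real
  proof -
    have "- (2*a) * (1/2) + ln (1 + (1/2) * (exp (2*a) - 1)) \<le> (2*a)\<^sup>2 / 8"
      using Hoeffdings_lemma_aux[of "2*a" "1/2"] that by simp
    hence "ln (1 + (1/2) * (exp (2*a) - 1)) \<le> a^2/2 + a" by (simp add: power2_eq_square)
    hence "exp (ln (1 + (1/2) * (exp (2*a) - 1))) \<le> exp (a^2/2 + a)" by simp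
    moreover have "1 + (1/2) * (exp (2*a) - 1) > 0" by (simp add: algebra_simps add_pos_pos)
    ultimately have "(1 + exp (2*a))/2 \<le> exp (a^2/2) * exp a"
      by (simp add: exp_add algebra_simps)
    hence "exp (-a) * ((1 + exp (2*a))/2) \<le> exp(-a) * (exp (a^2/2) * exp a)"
      by (intro mult_left_mono) auto
    moreover have "exp (-a) * ((1 + exp (2*a))/2) = (exp a + exp (-a)) / 2"
      by (simp add: field_simps flip: exp_add)
    moreover have "exp(-a) * (exp (a^2/2) * exp a) = exp (a^2/2)"
      by (simp add: field_simps flip: exp_add)
    ultimately show ?thesis by simp
  qed
  show ?thesis
  proof (cases "a \<ge> 0")
    case True then show ?thesis using main by blast
  next
    case False then show ?thesis using main[of "-a"] by (simp add: add.commute)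
  qed
qed

lemma exp_ge_pow_fact:
  fixes y :: real assumes "y \<ge> 0"
  shows "y ^ k / fact k \<le> exp y"
proof -
  have "y ^ k / fact k \<le> (\<Sum>n\<le>k. y ^ n / fact n)"
    by (rule member_le_sum) (use assms in auto)
  also have "\<dots> \<le> exp y"
    using assms summable_exp_generic[of y]
    by (auto simp: exp_def divide_inverse ac_simps intro!: sum_le_suminf)
  finally show ?thesis .
qed

lemma one_minus_ge_exp:
  fixes x :: real assumes "0 \<le> x" "x \<le> 1/2"
  shows "exp (-2*x) \<le> 1 - x"
proof -
  have "- x - 2 * x\<^sup>2 \<le> ln (1 - x)" by (rule ln_one_minus_pos_lower_bound) (use assms in auto)
  moreover have "-2*x \<le> - x - 2 * x\<^sup>2"
  proof -
    have "x*x \<le> x*(1/2)" by (rule mult_left_mono) (use assms in auto)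
    thus ?thesis by (simp add: power2_eq_square)
  qed
  ultimately have "exp (-2*x) \<le> exp (ln (1-x))" by simp
  thus ?thesis using assms by simp
qed

lemma pow_one_minus_ge_exp:
  fixes x :: real assumes "0 \<le> x" "x \<le> 1/2"
  shows "exp (-2*x*real n) \<le> (1 - x)^n"
proof -
  have "exp (-2*x*real n) = exp (-2*x)^n" by (simp add: exp_of_nat_mult[symmetric] algebra_simps)
  also have "\<dots> \<le> (1-x)^n" using one_minus_ge_exp[OF assms] by (intro power_mono) auto
  finally show ?thesis .
qed

definition Om :: "nat set \<Rightarrow> (nat \<Rightarrow> bool) set" where "Om V = {f. \<forall>v. v \<notin> V \<longrightarrow> \<not> f v}"

definition determ :: "nat set \<Rightarrow> nat set \<Rightarrow> (nat \<Rightarrow> bool) set \<Rightarrow> bool" where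
  "determ V S A \<longleftrightarrow> A \<subseteq> Om V \<and> (\<forall>f\<in>Om V. \<forall>g\<in>Om V. (\<forall>v\<in>S. f v = g v) \<longrightarrow> (f \<in> A \<longleftrightarrow> g \<in> A))"

lemma determ_mem: "determ V S A \<Longrightarrow> f \<in> Om V \<Longrightarrow> g \<in> Om V \<Longrightarrow> (\<forall>v\<in>S. f v = g v) \<Longrightarrow> f \<in> A \<longleftrightarrow> g \<in> A"
  unfolding determ_def by blast

lemma Om_eq: "Om V = (\<lambda>A v. v \<in> A) ` Pow V"
proof
  show "Om V \<subseteq> (\<lambda>A v. v \<in> A) ` Pow V"
  proof
    fix f assume f: "f \<in> Om V"
    have "f = (\<lambda>v. v \<in> {v. f v})" by auto
    moreover have "{v. f v} \<in> Pow V" using f by (auto simp: Om_def)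
    ultimately show "f \<in> (\<lambda>A v. v \<in> A) ` Pow V" by blast
  qed
qed (auto simp: Om_def)

lemma finite_Om: "finite V \<Longrightarrow> finite (Om V)"
  by (simp add: Om_eq)

lemma indep:
  assumes V: "finite V" and SV: "S \<subseteq> V" and RV: "R \<subseteq> V" and SR: "S \<inter> R = {}"
    and A: "determ V S A" and B: "determ V R B"
  shows "card (A \<inter> B) * card (Om V) = card A * card B"
proof -
  define W where "W = V - S"
  define mg where "mg = (\<lambda>(g::nat\<Rightarrow>bool, h::nat\<Rightarrow>bool) v. if v \<in> S then g v else h v)"
  have inj: "inj_on mg (Om S \<times> Om W)"
  proof (rule inj_onI)
    fix p q assume p: "p \<in> Om S \<times> Om W" and q: "q \<in> Om S \<times> Om W" and e: "mg p = mg q"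
    obtain g h where pg: "p = (g,h)" by (cases p)
    obtain g' h' where qg: "q = (g',h')" by (cases q)
    have "g = g'"
    proof
      fix v show "g v = g' v"
        using p q fun_cong[OF e, of v] unfolding pg qg mg_def Om_def by (auto split: if_splits)
    qed
    moreover have "h = h'"
    proof
      fix v show "h v = h' v"
        using p q fun_cong[OF e, of v] unfolding pg qg mg_def Om_def W_def by (auto split: if_splits)
    qed
    ultimately show "p = q" using pg qg by simp
  qed
  have img: "mg ` (Om S \<times> Om W) = Om V"
  proof
    show "mg ` (Om S \<times> Om W) \<subseteq> Om V"
      using SV by (auto simp: mg_def Om_def W_def)
    show "Om V \<subseteq> mg ` (Om S \<times> Om W)"
    proof
      fix f assume f: "f \<in> Om V"
      have "f = mg (\<lambda>v. v \<in> S \<and> f v, \<lambda>v. v \<notin> S \<and> f v)" by (auto simp: mg_def)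
      moreover have "(\<lambda>v. v \<in> S \<and> f v, \<lambda>v. v \<notin> S \<and> f v) \<in> Om S \<times> Om W"
        using f by (auto simp: Om_def W_def)
      ultimately show "f \<in> mg ` (Om S \<times> Om W)" by blast
    qed
  qed
  have cardZ: "card Z = card {p \<in> Om S \<times> Om W. mg p \<in> Z}" if "Z \<subseteq> Om V" for Z
  proof -
    have e: "Z = mg ` {p \<in> Om S \<times> Om W. mg p \<in> Z}"
    proof
      show "Z \<subseteq> mg ` {p \<in> Om S \<times> Om W. mg p \<in> Z}"
      proof
        fix z assume z: "z \<in> Z"
        then have "z \<in> mg ` (Om S \<times> Om W)" using that img by auto
        then obtain p where "p \<in> Om S \<times> Om W" "z = mg p" by blast
        then show "z \<in> mg ` {p \<in> Om S \<times> Om W. mg p \<in> Z}" using z by blast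
      qed
    qed auto
    have i: "inj_on mg {p \<in> Om S \<times> Om W. mg p \<in> Z}" using inj by (rule inj_on_subset) blast
    show ?thesis using arg_cong[of _ _ card, OF e] card_image[OF i] by (rule trans)
  qed
  define AS where "AS = {g \<in> Om S. mg (g, \<lambda>_. False) \<in> A}"
  define BR where "BR = {h \<in> Om W. mg (\<lambda>_. False, h) \<in> B}"
  have mgOm: "mg (g,h) \<in> Om V" if "g \<in> Om S" "h \<in> Om W" for g h
    using img that by blast
  have memA: "mg (g,h) \<in> A \<longleftrightarrow> g \<in> AS" if "g \<in> Om S" "h \<in> Om W" for g h
  proof -
    have "(\<lambda>_. False) \<in> Om W" by (simp add: Om_def)
    hence "mg (g, \<lambda>_. False) \<in> Om V" using mgOm that by blast
    moreover have "\<forall>v\<in>S. mg (g,h) v = mg (g, \<lambda>_. False) v" by (simp add: mg_def)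
    ultimately have "mg (g,h) \<in> A \<longleftrightarrow> mg (g, \<lambda>_. False) \<in> A"
      by (intro determ_mem[OF A mgOm[OF that]])
    thus ?thesis using that by (simp add: AS_def)
  qed
  have memB: "mg (g,h) \<in> B \<longleftrightarrow> h \<in> BR" if "g \<in> Om S" "h \<in> Om W" for g h
  proof -
    have "(\<lambda>_. False) \<in> Om S" by (simp add: Om_def)
    hence "mg (\<lambda>_. False, h) \<in> Om V" using mgOm that by blast
    moreover have "\<forall>v\<in>R. mg (g,h) v = mg (\<lambda>_. False, h) v" using SR by (auto simp: mg_def)
    ultimately have "mg (g,h) \<in> B \<longleftrightarrow> mg (\<lambda>_. False, h) \<in> B"
      by (intro determ_mem[OF B mgOm[OF that]])
    thus ?thesis using that by (simp add: BR_def)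
  qed
  have AB: "A \<subseteq> Om V" "B \<subseteq> Om V" using A B by (auto simp: determ_def)
  have "{p \<in> Om S \<times> Om W. mg p \<in> A} = AS \<times> Om W" using memA by (auto simp: AS_def)
  hence cA: "card A = card AS * card (Om W)" using cardZ[OF AB(1)] by (simp add: card_cartesian_product)
  have "{p \<in> Om S \<times> Om W. mg p \<in> B} = Om S \<times> BR" using memB by (auto simp: BR_def)
  hence cB: "card B = card (Om S) * card BR" using cardZ[OF AB(2)] by (simp add: card_cartesian_product)
  have "{p \<in> Om S \<times> Om W. mg p \<in> A \<inter> B} = AS \<times> BR" using memA memB by (auto simp: AS_def BR_def)
  hence cAB: "card (A \<inter> B) = card AS * card BR" using cardZ[of "A \<inter> B"] AB by (simp add: card_cartesian_product Int_mono inf.coboundedI1)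
  have "{p \<in> Om S \<times> Om W. mg p \<in> Om V} = Om S \<times> Om W" using mgOm by auto
  hence cV: "card (Om V) = card (Om S) * card (Om W)" using cardZ[of "Om V"] by (simp add: card_cartesian_product)
  show ?thesis using cA cB cAB cV by simp
qed

lemma mgf:
  fixes g :: "nat \<Rightarrow> bool \<Rightarrow> real" and l :: real
  assumes "finite K" "finite V" "K \<subseteq> V" "\<forall>k\<in>K. \<forall>b. g k (\<not>b) = - g k b \<and> \<bar>g k b\<bar> \<le> 1"
  shows "(\<Sum>f\<in>Om V. exp (l * (\<Sum>k\<in>K. g k (f k)))) \<le> exp (l^2/2) ^ card K * card (Om V)"
  using assms
proof (induction K rule: finite_induct)
  case empty then show ?case by simp
next
  case (insert k K)
  define H where "H = (\<lambda>f. exp (l * (\<Sum>j\<in>K. g j (f j))))"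
  define fl where "fl = (\<lambda>f::nat\<Rightarrow>bool. f(k := \<not> f k))"
  have kV: "k \<in> V" using insert by auto
  have flOm: "fl f \<in> Om V" if "f \<in> Om V" for f using that kV by (auto simp: Om_def fl_def)
  have flfl: "fl (fl f) = f" for f by (auto simp: fl_def)
  have reidx: "(\<Sum>f\<in>Om V. F f) = (\<Sum>f\<in>Om V. F (fl f))" for F :: "(nat\<Rightarrow>bool) \<Rightarrow> real"
    by (rule sum.reindex_bij_witness[where i=fl and j=fl]) (auto simp: flfl flOm)
  have Hfl: "H (fl f) = H f" for f
  proof -
    have "(\<Sum>j\<in>K. g j (fl f j)) = (\<Sum>j\<in>K. g j (f j))"
      by (rule sum.cong) (use insert.hyps in \<open>auto simp: fl_def\<close>)
    thus ?thesis by (simp add: H_def)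
  qed
  have eq1: "(\<Sum>f\<in>Om V. exp (l * (\<Sum>j\<in>insert k K. g j (f j)))) = (\<Sum>f\<in>Om V. H f * exp (l * g k (f k)))"
    using insert.hyps by (simp add: H_def distrib_left exp_add mult.commute)
  have eqA: "(\<Sum>f\<in>Om V. H f * exp (l * g k (f k))) = (\<Sum>f\<in>Om V. H f * exp (- (l * g k (f k))))"
  proof -
    have "(\<Sum>f\<in>Om V. H f * exp (l * g k (f k))) = (\<Sum>f\<in>Om V. H (fl f) * exp (l * g k (fl f k)))"
      by (rule reidx)
    also have "\<dots> = (\<Sum>f\<in>Om V. H f * exp (- (l * g k (f k))))"
    proof (rule sum.cong)
      fix f assume "f \<in> Om V"
      have "fl f k = (\<not> f k)" by (simp add: fl_def)
      then show "H (fl f) * exp (l * g k (fl f k)) = H f * exp (- (l * g k (f k)))"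
        using insert.prems by (simp add: Hfl)
    qed simp
    finally show ?thesis .
  qed
  have eqB: "(\<Sum>f\<in>Om V. H f * ((exp (l * g k (f k)) + exp (- (l * g k (f k))))/2))
     = ((\<Sum>f\<in>Om V. H f * exp (l * g k (f k))) + (\<Sum>f\<in>Om V. H f * exp (- (l * g k (f k)))))/2"
    by (simp add: sum.distrib[symmetric] sum_divide_distrib[symmetric] ring_distribs)
  have eq2: "(\<Sum>f\<in>Om V. exp (l * (\<Sum>j\<in>insert k K. g j (f j)))) = (\<Sum>f\<in>Om V. H f * ((exp (l * g k (f k)) + exp (- (l * g k (f k))))/2))"
    using eq1 eqA eqB by simp
  note eq2
  also have "\<dots> \<le> (\<Sum>f\<in>Om V. H f * exp (l^2/2))"
  proof (rule sum_mono)
    fix f assume "f \<in> Om V"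
    have gb: "\<bar>g k (f k)\<bar> \<le> 1" using insert.prems by auto
    have "(l * g k (f k))^2 = l^2 * (g k (f k))^2" by (simp add: power_mult_distrib)
    also have "\<dots> \<le> l^2 * 1"
      using gb by (intro mult_left_mono) (simp_all add: abs_square_le_1)
    finally have "exp ((l * g k (f k))^2/2) \<le> exp (l^2/2)" by simp
    hence "(exp (l * g k (f k)) + exp (- (l * g k (f k))))/2 \<le> exp (l^2/2)"
      using cosh_le_exp_sq[of "l * g k (f k)"] by linarith
    thus "H f * ((exp (l * g k (f k)) + exp (- (l * g k (f k))))/2) \<le> H f * exp (l^2/2)"
      by (intro mult_left_mono) (auto simp: H_def)
  qed
  also have "\<dots> = exp (l^2/2) * (\<Sum>f\<in>Om V. H f)" by (simp add: sum_distrib_right mult.commute)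
  also have "\<dots> \<le> exp (l^2/2) * (exp (l^2/2) ^ card K * card (Om V))"
    using insert by (intro mult_left_mono) (auto simp: H_def)
  also have "\<dots> = exp (l^2/2) ^ card (insert k K) * card (Om V)"
    using insert.hyps by simp
  finally show ?case .
qed


lemma tail1:
  fixes g :: "nat \<Rightarrow> bool \<Rightarrow> real"
  assumes "finite K" "finite V" "K \<subseteq> V" "\<forall>k\<in>K. \<forall>b. g k (\<not>b) = - g k b \<and> \<bar>g k b\<bar> \<le> 1"
    and tau: "0 \<le> \<tau>" and KM: "real (card K) \<le> M" and M: "0 < M"
  shows "real (card {f\<in>Om V. \<tau> < (\<Sum>k\<in>K. g k (f k))}) \<le> exp (-(\<tau>^2)/(2*M)) * card (Om V)"
proof -
  define l where "l = \<tau> / M"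
  have l0: "l \<ge> 0" using tau M by (simp add: l_def)
  define E where "E = {f\<in>Om V. \<tau> < (\<Sum>k\<in>K. g k (f k))}"
  have fin: "finite (Om V)" using assms(2) by (rule finite_Om)
  have "real (card E) * exp (l * \<tau>) \<le> (\<Sum>f\<in>E. exp (l * (\<Sum>k\<in>K. g k (f k))))"
  proof -
    have "(\<Sum>f\<in>E. exp (l * \<tau>)) \<le> (\<Sum>f\<in>E. exp (l * (\<Sum>k\<in>K. g k (f k))))"
      by (rule sum_mono) (use l0 in \<open>auto simp: E_def intro!: mult_left_mono\<close>)
    thus ?thesis by simp
  qed
  also have "\<dots> \<le> (\<Sum>f\<in>Om V. exp (l * (\<Sum>k\<in>K. g k (f k))))"
    by (rule sum_mono2) (use fin in \<open>auto simp: E_def\<close>)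
  also have "\<dots> \<le> exp (l^2/2) ^ card K * card (Om V)"
    by (rule mgf) (use assms in auto)
  also have "\<dots> \<le> exp (l^2/2 * M) * card (Om V)"
  proof -
    have "exp (l^2/2) ^ card K = exp (real (card K) * (l^2/2))" by (rule exp_of_nat_mult[symmetric])
    also have "\<dots> \<le> exp (l^2/2 * M)" using KM by (simp add: mult.commute mult_right_mono)
    finally show ?thesis by (intro mult_right_mono) auto
  qed
  finally have "real (card E) * exp (l * \<tau>) \<le> exp (l^2/2 * M) * card (Om V)" .
  hence "real (card E) \<le> exp (l^2/2 * M) * card (Om V) / exp (l * \<tau>)"
    by (simp add: field_simps)
  also have "\<dots> = exp (l^2/2 * M - l * \<tau>) * card (Om V)" by (simp add: exp_diff)
  also have "l^2/2 * M - l * \<tau> = -(\<tau>^2)/(2*M)" using M by (simp add: l_def field_simps power2_eq_square)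
  finally show ?thesis by (simp add: E_def)
qed

lemma tail2:
  fixes g :: "nat \<Rightarrow> bool \<Rightarrow> real"
  assumes "finite K" "finite V" "K \<subseteq> V" "\<forall>k\<in>K. \<forall>b. g k (\<not>b) = - g k b \<and> \<bar>g k b\<bar> \<le> 1"
    and tau: "0 \<le> \<tau>" and KM: "real (card K) \<le> M" and M: "0 < M"
  shows "real (card {f\<in>Om V. \<tau> < \<bar>\<Sum>k\<in>K. g k (f k)\<bar>}) \<le> 2 * exp (-(\<tau>^2)/(2*M)) * card (Om V)"
proof -
  have fin: "finite (Om V)" using assms(2) by (rule finite_Om)
  have "{f\<in>Om V. \<tau> < \<bar>\<Sum>k\<in>K. g k (f k)\<bar>} \<subseteq> {f\<in>Om V. \<tau> < (\<Sum>k\<in>K. g k (f k))} \<union> {f\<in>Om V. \<tau> < (\<Sum>k\<in>K. (\<lambda>k b. - g k b) k (f k))}"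
    by (auto simp: sum_negf abs_if split: if_splits)
  hence "card {f\<in>Om V. \<tau> < \<bar>\<Sum>k\<in>K. g k (f k)\<bar>} \<le> card ({f\<in>Om V. \<tau> < (\<Sum>k\<in>K. g k (f k))} \<union> {f\<in>Om V. \<tau> < (\<Sum>k\<in>K. (\<lambda>k b. - g k b) k (f k))})"
    by (rule card_mono[rotated]) (use fin in auto)
  also have "\<dots> \<le> card {f\<in>Om V. \<tau> < (\<Sum>k\<in>K. g k (f k))} + card {f\<in>Om V. \<tau> < (\<Sum>k\<in>K. (\<lambda>k b. - g k b) k (f k))}"
    by (rule card_Un_le)
  finally have "real (card {f\<in>Om V. \<tau> < \<bar>\<Sum>k\<in>K. g k (f k)\<bar>}) \<le> real (card {f\<in>Om V. \<tau> < (\<Sum>k\<in>K. g k (f k))}) + real (card {f\<in>Om V. \<tau> < (\<Sum>k\<in>K. (\<lambda>k b. - g k b) k (f k))})"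
    by linarith
  also have "\<dots> \<le> exp (-(\<tau>^2)/(2*M)) * card (Om V) + exp (-(\<tau>^2)/(2*M)) * card (Om V)"
    by (intro add_mono tail1) (use assms in auto)
  finally show ?thesis by (simp add: algebra_simps)
qed

lemma card_C_step:
  fixes y :: real
  assumes "finite Oms" "real (card (B \<inter> C)) \<le> y * card C" "C \<subseteq> Oms"
  shows "(1 - y) * card C \<le> real (card (C - B))"
proof -
  have fC: "finite C" using assms by (metis finite_subset)
  have "card (C - B) = card C - card (C \<inter> B)" using fC by (intro card_Diff_subset_Int) auto
  moreover have "card (C \<inter> B) \<le> card C" using fC by (intro card_mono) auto
  ultimately have "real (card (C - B)) = real (card C) - real (card (C \<inter> B))" by simp
  moreover have "C \<inter> B = B \<inter> C" by blast
  ultimately show ?thesis using assms(2) by (simp add: algebra_simps)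
qed

lemma lll:
  fixes Oms :: "'a set" and A :: "'i \<Rightarrow> 'a set" and I :: "'i set" and G :: "'i \<Rightarrow> 'i set" and x :: "'i \<Rightarrow> real"
  assumes fOms: "finite Oms" and fI: "finite I"
    and GI: "\<forall>i\<in>I. G i \<subseteq> I \<and> i \<notin> G i"
    and x01: "\<forall>i\<in>I. 0 \<le> x i \<and> x i < 1"
    and indep: "\<forall>i\<in>I. \<forall>T. T \<subseteq> I \<longrightarrow> i \<notin> T \<longrightarrow> T \<inter> G i = {} \<longrightarrow>
        real (card (A i \<inter> (Oms - \<Union>(A ` T)))) * card Oms = real (card (A i)) * card (Oms - \<Union>(A ` T))"
    and bound: "\<forall>i\<in>I. real (card (A i)) \<le> x i * (\<Prod>j\<in>G i. 1 - x j) * card Oms"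
  shows "(\<Prod>i\<in>I. 1 - x i) * card Oms \<le> card (Oms - \<Union>(A ` I))"
proof -
  define C where "C T = Oms - \<Union>(A ` T)" for T
  have CO: "C T \<subseteq> Oms" for T by (auto simp: C_def)
  have Cins: "C (insert j T) = C T - A j" for j T by (auto simp: C_def)
  have Cmono: "T \<subseteq> T' \<Longrightarrow> C T' \<subseteq> C T" for T T' by (auto simp: C_def)
  have claim: "real (card (A i \<inter> C T)) \<le> x i * card (C T)" if "T \<subseteq> I" "i \<in> I" "i \<notin> T" for T i
    using that
  proof (induction "card T" arbitrary: T i rule: less_induct)
    case less
    define T1 where "T1 = T \<inter> G i"
    define T2 where "T2 = T - G i"
    have fT: "finite T" using less.prems fI by (metis finite_subset)
    have sub: "(\<Prod>j\<in>U. 1 - x j) * card (C T2) \<le> card (C (T2 \<union> U))" if "U \<subseteq> T1" for U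
    proof -
      have "finite U" using that fT by (metis T1_def finite_Int finite_subset)
      then show ?thesis using that
      proof (induction U rule: finite_induct)
        case empty then show ?case by simp
      next
        case (insert j U)
        have jT: "j \<in> T" "j \<in> I" "j \<in> G i" using insert.prems less.prems by (auto simp: T1_def)
        have UT: "U \<subseteq> T1" using insert.prems by auto
        have sT: "T2 \<union> U \<subseteq> T - {j}" using insert.hyps UT jT by (auto simp: T1_def T2_def)
        have "card (T2 \<union> U) \<le> card (T - {j})" using sT fT by (intro card_mono) auto
        also have "\<dots> < card T" by (rule card_Diff1_less[OF fT jT(1)])
        finally have cl: "card (T2 \<union> U) < card T" .
        have "real (card (A j \<inter> C (T2 \<union> U))) \<le> x j * card (C (T2 \<union> U))"
          by (rule less.hyps[OF cl]) (use sT less.prems jT in auto)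
        hence step: "(1 - x j) * card (C (T2 \<union> U)) \<le> card (C (T2 \<union> U) - A j)"
          by (intro card_C_step[OF fOms _ CO])
        have xj: "0 \<le> 1 - x j" using x01 jT by auto
        have "(\<Prod>j\<in>insert j U. 1 - x j) * card (C T2) = (1 - x j) * ((\<Prod>j\<in>U. 1 - x j) * card (C T2))"
          using insert.hyps by simp
        also have "\<dots> \<le> (1 - x j) * card (C (T2 \<union> U))"
          using insert.IH[OF UT] xj by (rule mult_left_mono)
        also have "\<dots> \<le> card (C (T2 \<union> U) - A j)" by (rule step)
        also have "C (T2 \<union> U) - A j = C (T2 \<union> insert j U)" using Cins[of j "T2 \<union> U"] by simp
        finally show ?case .
      qed
    qed
    have iT2: "i \<notin> T2" "T2 \<subseteq> I" "T2 \<inter> G i = {}" using less.prems by (auto simp: T2_def)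
    have fG: "finite (G i)" using GI less.prems fI by (metis finite_subset)
    have "card (A i \<inter> C T) \<le> card (A i \<inter> C T2)"
      using Cmono[of T2 T] fOms CO[of T2] by (intro card_mono) (auto simp: T2_def intro: finite_subset)
    hence r1: "real (card (A i \<inter> C T)) \<le> card (A i \<inter> C T2)" by simp
    have pG: "(\<Prod>j\<in>G i. 1 - x j) \<le> (\<Prod>j\<in>T1. 1 - x j)"
    proof -
      have T1G: "T1 \<subseteq> G i" by (auto simp: T1_def)
      have "(\<Prod>j\<in>G i. 1 - x j) = (\<Prod>j\<in>G i - T1. 1 - x j) * (\<Prod>j\<in>T1. 1 - x j)"
        using prod.subset_diff[OF T1G fG] by simp
      also have "\<dots> \<le> 1 * (\<Prod>j\<in>T1. 1 - x j)"
      proof (rule mult_right_mono)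
        show "(\<Prod>j\<in>G i - T1. 1 - x j) \<le> 1"
          by (rule prod_le_1) (use x01 GI less.prems in force)
        show "0 \<le> (\<Prod>j\<in>T1. 1 - x j)"
          by (rule prod_nonneg) (use x01 GI less.prems T1G in force)
      qed
      finally show ?thesis by simp
    qed
    show ?case
    proof (cases "card Oms = 0")
      case True
      hence "Oms = {}" using fOms by simp
      thus ?thesis by (simp add: C_def)
    next
      case False
      have e: "real (card (A i \<inter> C T2)) * card Oms = real (card (A i)) * card (C T2)"
        using indep less.prems iT2 by (simp add: C_def)
      have "real (card (A i)) * card (C T2) \<le> x i * (\<Prod>j\<in>G i. 1 - x j) * card Oms * card (C T2)"
        using bound less.prems by (intro mult_right_mono) auto
      hence "real (card (A i \<inter> C T2)) * card Oms \<le> (x i * (\<Prod>j\<in>G i. 1 - x j) * card (C T2)) * card Oms"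
        using e by (simp add: algebra_simps)
      hence r2: "real (card (A i \<inter> C T2)) \<le> x i * (\<Prod>j\<in>G i. 1 - x j) * card (C T2)"
        using False by simp
      have "x i * (\<Prod>j\<in>G i. 1 - x j) * card (C T2) \<le> x i * ((\<Prod>j\<in>T1. 1 - x j) * card (C T2))"
        using pG x01 less.prems by (simp add: mult.assoc mult_left_mono mult_right_mono)
      also have "\<dots> \<le> x i * card (C (T2 \<union> T1))"
        using sub[of T1] x01 less.prems by (intro mult_left_mono) auto
      also have "T2 \<union> T1 = T" by (auto simp: T1_def T2_def)
      finally show ?thesis using r1 r2 by linarith
    qed
  qed
  have fin: "(\<Prod>j\<in>U. 1 - x j) * card Oms \<le> card (C U)" if "U \<subseteq> I" for U
  proof -
    have "finite U" using that fI by (metis finite_subset)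
    then show ?thesis using that
    proof (induction U rule: finite_induct)
      case empty then show ?case by (simp add: C_def)
    next
      case (insert j U)
      have UI: "U \<subseteq> I" "j \<in> I" using insert.prems by auto
      have "real (card (A j \<inter> C U)) \<le> x j * card (C U)"
        by (rule claim) (use UI insert.hyps in auto)
      hence step: "(1 - x j) * card (C U) \<le> card (C U - A j)"
        by (intro card_C_step[OF fOms _ CO])
      have xj: "0 \<le> 1 - x j" using x01 UI by auto
      have "(\<Prod>j\<in>insert j U. 1 - x j) * card Oms = (1 - x j) * ((\<Prod>j\<in>U. 1 - x j) * card Oms)"
        using insert.hyps by simp
      also have "\<dots> \<le> (1 - x j) * card (C U)"
        using insert.IH[OF UI(1)] xj by (rule mult_left_mono)
      also have "\<dots> \<le> card (C U - A j)" by (rule step)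
      also have "C U - A j = C (insert j U)" using Cins[of j U] by simp
      finally show ?case .
    qed
  qed
  show ?thesis using fin[of I] by (simp add: C_def)
qed

lemma sum_alt_pairs:
  fixes f :: "nat \<Rightarrow> bool"
  shows "(\<Sum>i<2*j. (if even i then 1 else -1) * (if f (i div 2) then 1 else -1::real)) = 0"
proof (induction j)
  case 0 then show ?case by simp
next
  case (Suc j)
  have e2: "2 * Suc j = Suc (Suc (2*j))" by simp
  have d1: "Suc (2*j) div 2 = j" by simp
  have d0: "(2*j) div 2 = j" by simp
  show ?case unfolding e2 sum.lessThan_Suc using Suc.IH d1 d0 by simp
qed

lemma sum_alt_le1:
  fixes f :: "nat \<Rightarrow> bool"
  shows "\<bar>\<Sum>i<m. (if even i then 1 else -1) * (if f (i div 2) then 1 else -1::real)\<bar> \<le> 1"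
proof (cases "even m")
  case True
  then obtain j where m: "m = 2*j" by (rule evenE)
  show ?thesis unfolding m sum_alt_pairs[of f j] by simp
next
  case False
  then obtain j where m0: "m = 2*j + 1" by (rule oddE)
  have m: "m = Suc (2*j)" using m0 by simp
  have d0: "(2*j) div 2 = j" by simp
  have "(\<Sum>i<m. (if even i then 1 else -1) * (if f (i div 2) then 1 else -1::real))
      = (if f j then 1 else -1)"
    unfolding m sum.lessThan_Suc sum_alt_pairs[of f j] using d0 by simp
  then show ?thesis by simp
qed

lemma sub_two:
  assumes "J \<subseteq> {a, b}" shows "J = {} \<or> J = {a} \<or> J = {b} \<or> J = {a,b}"
proof (cases "a \<in> J")
  case True
  show ?thesis
  proof (cases "b \<in> J")
    case True
    hence "J = {a,b}" using \<open>a \<in> J\<close> assms by auto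
    thus ?thesis by simp
  next
    case False
    hence "J = {a}" using \<open>a \<in> J\<close> assms by auto
    thus ?thesis by simp
  qed
next
  case False
  show ?thesis
  proof (cases "b \<in> J")
    case True
    hence "J = {b}" using \<open>a \<notin> J\<close> assms by auto
    thus ?thesis by simp
  next
    case False
    hence "J = {}" using \<open>a \<notin> J\<close> assms by auto
    thus ?thesis by simp
  qed
qed

lemma alt_sub_le1:
  assumes "J \<subseteq> {2*k, Suc (2*k)}"
  shows "\<bar>\<Sum>i\<in>J. (if even i then 1 else -1::real)\<bar> \<le> 1"
proof -
  have n: "Suc (2*k) \<noteq> 2*k" by simp
  from sub_two[OF assms] show ?thesis using n by (elim disjE) simp_all
qed

locale pairing =
  fixes X :: "nat set" and m :: nat and e :: "nat \<Rightarrow> nat"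
  assumes bij: "bij_betw e {0..<m} X"
begin

definition io where "io u = inv_into {0..<m} e u"
definition pr where "pr u = io u div 2"
definition sg :: "nat \<Rightarrow> real" where "sg u = (if even (io u) then 1 else -1)"
definition sv :: "(nat \<Rightarrow> bool) \<Rightarrow> nat \<Rightarrow> real" where "sv f u = sg u * (if f (pr u) then 1 else -1)"
definition Ev :: "nat set \<Rightarrow> real \<Rightarrow> (nat \<Rightarrow> bool) set" where
  "Ev N \<tau> = {f \<in> Om {0..<m}. \<tau> < \<bar>\<Sum>u\<in>N. sv f u\<bar>}"

lemma finX: "finite X" using bij bij_betw_finite by blast

lemma io_lt: "u \<in> X \<Longrightarrow> io u < m"
  unfolding io_def using bij by (metis atLeastLessThan_iff bij_betw_def inv_into_into)

lemma e_io: "u \<in> X \<Longrightarrow> e (io u) = u"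
  unfolding io_def using bij by (metis bij_betw_def f_inv_into_f)

lemma io_e: "i < m \<Longrightarrow> io (e i) = i"
  unfolding io_def using bij by (metis atLeastLessThan_iff bij_betw_def inv_into_f_f zero_le)

lemma inj_io: "inj_on io X"
  by (metis e_io inj_onI)

lemma pr_lt: "u \<in> X \<Longrightarrow> pr u < m"
  using io_lt pr_def by fastforce

lemma ck_le1:
  assumes "N \<subseteq> X"
  shows "\<bar>\<Sum>u\<in>{u\<in>N. pr u = k}. sg u\<bar> \<le> 1"
proof -
  have "(\<Sum>u\<in>{u\<in>N. pr u = k}. sg u) = (\<Sum>i\<in>io ` {u\<in>N. pr u = k}. (if even i then 1 else -1::real))"
    using inj_on_subset[OF inj_io, of "{u\<in>N. pr u = k}"] assms
    by (subst sum.reindex) (auto simp: sg_def)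
  moreover have "io ` {u\<in>N. pr u = k} \<subseteq> {2*k, Suc (2*k)}"
    by (auto simp: pr_def)
  ultimately show ?thesis using alt_sub_le1 by simp
qed

lemma sum_sv_split:
  assumes "N \<subseteq> X"
  shows "(\<Sum>u\<in>N. sv f u) = (\<Sum>k\<in>pr ` N. (\<Sum>u\<in>{u\<in>N. pr u = k}. sg u) * (if f k then 1 else -1))"
proof -
  have fN: "finite N" using assms finX by (metis finite_subset)
  have "(\<Sum>u\<in>N. sv f u) = (\<Sum>k\<in>pr ` N. \<Sum>u\<in>{u\<in>N. pr u = k}. sv f u)"
    using fN by (rule sum.image_gen)
  also have "\<dots> = (\<Sum>k\<in>pr ` N. (\<Sum>u\<in>{u\<in>N. pr u = k}. sg u) * (if f k then 1 else -1))"
    by (rule sum.cong) (auto simp: sv_def sum_distrib_right)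
  finally show ?thesis .
qed

lemma chern:
  assumes NX: "N \<subseteq> X" and tau: "0 \<le> \<tau>" and NM: "real (card N) \<le> M" and M: "0 < M"
  shows "real (card (Ev N \<tau>)) \<le> 2 * exp (-(\<tau>^2)/(2*M)) * card (Om {0..<m})"
proof -
  define g where "g k b = (\<Sum>u\<in>{u\<in>N. pr u = k}. sg u) * (if b then 1 else -1::real)" for k b
  have fN: "finite N" using NX finX by (metis finite_subset)
  have "Ev N \<tau> = {f\<in>Om {0..<m}. \<tau> < \<bar>\<Sum>k\<in>pr ` N. g k (f k)\<bar>}"
    unfolding Ev_def g_def using sum_sv_split[OF NX] by simp
  also have "real (card \<dots>) \<le> 2 * exp (-(\<tau>^2)/(2*M)) * card (Om {0..<m})"
  proof (rule tail2)
    show "finite (pr ` N)" using fN by simp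
    show "pr ` N \<subseteq> {0..<m}" using NX pr_lt by auto
    show "\<forall>k\<in>pr ` N. \<forall>b. g k (\<not> b) = - g k b \<and> \<bar>g k b\<bar> \<le> 1"
      using ck_le1[OF NX] by (auto simp: g_def abs_mult)
    have "card (pr ` N) \<le> card N" using fN by (rule card_image_le)
    thus "real (card (pr ` N)) \<le> M" using NM by linarith
  qed (use tau M in auto)
  finally show ?thesis .
qed

lemma determ_Ev:
  assumes "N \<subseteq> X"
  shows "determ {0..<m} (pr ` N) (Ev N \<tau>)"
proof -
  have key: "(\<Sum>u\<in>N. sv f u) = (\<Sum>u\<in>N. sv g u)" if "\<forall>v\<in>pr ` N. f v = g v" for f g
    by (rule sum.cong) (use that in \<open>auto simp: sv_def\<close>)
  show ?thesis unfolding determ_def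
  proof (intro conjI ballI impI)
    show "Ev N \<tau> \<subseteq> Om {0..<m}" by (auto simp: Ev_def)
    fix f g assume "f \<in> Om {0..<m}" "g \<in> Om {0..<m}" "\<forall>v\<in>pr ` N. f v = g v"
    then show "f \<in> Ev N \<tau> \<longleftrightarrow> g \<in> Ev N \<tau>" using key[of f g] by (simp add: Ev_def)
  qed
qed

lemma balance:
  "\<bar>\<Sum>u\<in>X. sv f u\<bar> \<le> 1"
proof -
  have "(\<Sum>u\<in>X. sv f u) = (\<Sum>i\<in>{0..<m}. sv f (e i))"
  proof -
    have i: "inj_on e {0..<m}" and im: "e ` {0..<m} = X" using bij by (auto simp: bij_betw_def)
    show ?thesis using sum.reindex[OF i, of "sv f"] im by simp
  qed
  also have "\<dots> = (\<Sum>i<m. (if even i then 1 else -1) * (if f (i div 2) then 1 else -1::real))"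
    by (rule sum.cong) (auto simp: sv_def sg_def pr_def io_e)
  finally show ?thesis using sum_alt_le1 by simp
qed

lemma Q_card:
  assumes "N \<subseteq> X"
  shows "card {u\<in>X. pr u \<in> pr ` N} \<le> 2 * card N"
proof -
  have fN: "finite N" using assms finX by (metis finite_subset)
  have "{u\<in>X. pr u \<in> pr ` N} \<subseteq> e ` (\<Union>k\<in>pr ` N. {2*k, Suc (2*k)})"
  proof
    fix u assume u: "u \<in> {u\<in>X. pr u \<in> pr ` N}"
    then have "io u \<in> {2 * pr u, Suc (2 * pr u)}" by (auto simp: pr_def)
    then have "io u \<in> (\<Union>k\<in>pr ` N. {2*k, Suc (2*k)})" using u by blast
    moreover have "u = e (io u)" using u e_io by simp
    ultimately show "u \<in> e ` (\<Union>k\<in>pr ` N. {2*k, Suc (2*k)})" by (rule image_eqI[rotated])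
  qed
  hence "card {u\<in>X. pr u \<in> pr ` N} \<le> card (e ` (\<Union>k\<in>pr ` N. {2*k, Suc (2*k)}))"
    using fN by (intro card_mono) auto
  also have "\<dots> \<le> card (\<Union>k\<in>pr ` N. {2*k, Suc (2*k)})" by (rule card_image_le) (use fN in auto)
  also have "\<dots> \<le> (\<Sum>k\<in>pr ` N. card {2*k, Suc (2*k)})" by (rule card_UN_le) (use fN in auto)
  also have "\<dots> \<le> (\<Sum>k\<in>pr ` N. 2)" by (rule sum_mono) (simp add: card_insert_if)
  also have "\<dots> = 2 * card (pr ` N)" by simp
  also have "\<dots> \<le> 2 * card N" using card_image_le[OF fN] by simp
  finally show ?thesis .
qed

end

lemma exp_big16:
  fixes z :: real assumes "z \<ge> 64"
  shows "z^16 * ((3/4)^16 / fact 16) \<le> exp (3*z/4)"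
proof -
  have "(3*z/4)^16 / fact 16 \<le> exp (3*z/4)" by (rule exp_ge_pow_fact) (use assms in auto)
  moreover have "(3*z/4)^16 / fact 16 = z^16 * ((3/4)^16 / fact 16)" by (simp add: power_mult_distrib field_simps)
  ultimately show ?thesis by simp
qed

lemma num1:
  fixes z :: real assumes z: "z \<ge> 64"
  shows "z^6 * exp (-(3*z/4)) \<le> 1/200"
proof -
  define c :: real where "c = (3/4)^16 / fact 16"
  have c0: "c > 0" by (simp add: c_def)
  have E: "z^16 * c \<le> exp (3*z/4)" using exp_big16[OF z] by (simp add: c_def)
  have z10: "64^10 \<le> z^10" using z by (intro power_mono) auto
  have "z^6 * exp (-(3*z/4)) = z^6 / exp (3*z/4)" by (simp add: exp_minus field_simps)
  also have "\<dots> \<le> z^6 / (z^16 * c)" using E z c0 by (intro divide_left_mono) auto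
  also have "\<dots> = 1 / (z^10 * c)"
  proof -
    have "z^16 = z^6 * z^10" by (simp flip: power_add)
    moreover have "z^6 > 0" using z by simp
    ultimately show ?thesis using c0 by (simp add: field_simps)
  qed
  also have "\<dots> \<le> 1 / (64^10 * c)"
  proof -
    have "(0::real) < 64^10 * c" using c0 by simp
    moreover have "64^10 * c \<le> z^10 * c" using z10 c0 by (intro mult_right_mono) auto
    moreover have "(0::real) < z^10 * c" using c0 z by simp
    ultimately show ?thesis by (intro divide_left_mono) (auto intro: mult_pos_pos)
  qed
  also have "\<dots> \<le> 1/200" by (simp add: c_def fact_numeral power_divide)
  finally show ?thesis .
qed

lemma num2:
  fixes z :: real assumes z: "z \<ge> 64"
  shows "z^3 * exp (-(3*z/4)) \<le> 1/10^6"
proof -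
  define c :: real where "c = (3/4)^16 / fact 16"
  have c0: "c > 0" by (simp add: c_def)
  have E: "z^16 * c \<le> exp (3*z/4)" using exp_big16[OF z] by (simp add: c_def)
  have z13: "64^13 \<le> z^13" using z by (intro power_mono) auto
  have "z^3 * exp (-(3*z/4)) = z^3 / exp (3*z/4)" by (simp add: exp_minus field_simps)
  also have "\<dots> \<le> z^3 / (z^16 * c)" using E z c0 by (intro divide_left_mono) auto
  also have "\<dots> = 1 / (z^13 * c)"
  proof -
    have "z^16 = z^3 * z^13" by (simp flip: power_add)
    moreover have "z^3 > 0" using z by simp
    ultimately show ?thesis using c0 by (simp add: field_simps)
  qed
  also have "\<dots> \<le> 1 / (64^13 * c)"
  proof -
    have "(0::real) < 64^13 * c" using c0 by simp
    moreover have "64^13 * c \<le> z^13 * c" using z13 c0 by (intro mult_right_mono) auto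
    moreover have "(0::real) < z^13 * c" using c0 z by simp
    ultimately show ?thesis by (intro divide_left_mono) (auto intro: mult_pos_pos)
  qed
  also have "\<dots> \<le> 1/10^6" by (simp add: c_def fact_numeral power_divide)
  finally show ?thesis .
qed

lemma num3:
  fixes D :: real assumes D: "D \<ge> 10^12"
  shows "D^2 * exp (-(D/500)) \<le> 1/100"
proof -
  have E: "(D/500)^3 / fact 3 \<le> exp (D/500)" by (rule exp_ge_pow_fact) (use D in auto)
  have D0: "D > 0" using D by simp
  have "D^2 * exp (-(D/500)) = D^2 / exp (D/500)" by (simp add: exp_minus field_simps)
  also have "\<dots> \<le> D^2 / ((D/500)^3 / fact 3)" using E D0 by (intro divide_left_mono) auto
  also have "\<dots> = 750000000 / D" using D0 by (simp add: field_simps fact_numeral power3_eq_cube power2_eq_square)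
  also have "\<dots> \<le> 750000000 / 10^12" using D D0 by (intro divide_left_mono) auto
  also have "\<dots> \<le> 1/100" by simp
  finally show ?thesis .
qed

lemma determ_C:
  assumes "\<forall>j\<in>T. determ V (S j) (A j)"
  shows "determ V (\<Union>j\<in>T. S j) (Om V - \<Union>(A ` T))"
  unfolding determ_def
proof (intro conjI ballI impI)
  show "Om V - \<Union>(A ` T) \<subseteq> Om V" by blast
  fix f g assume f: "f \<in> Om V" and g: "g \<in> Om V" and fg: "\<forall>v\<in>(\<Union>j\<in>T. S j). f v = g v"
  have "f \<in> A j \<longleftrightarrow> g \<in> A j" if j: "j \<in> T" for j
  proof -
    have "\<forall>v\<in>S j. f v = g v" using fg j by blast
    thus ?thesis using determ_mem[of V "S j" "A j" f g] assms j f g by blast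
  qed
  then show "f \<in> Om V - \<Union>(A ` T) \<longleftrightarrow> g \<in> Om V - \<Union>(A ` T)" using f g by blast
qed

lemma prod_bound:
  fixes a b nA nB :: real
  assumes fin: "finite Gi" and sub: "Gi \<subseteq> X \<union> Y" and XY: "X \<inter> Y = {}"
    and a: "0 \<le> a" "a \<le> 1/2" and b: "0 \<le> b" "b \<le> 1/2"
    and cA: "real (card (Gi \<inter> X)) \<le> nA" and cB: "real (card (Gi \<inter> Y)) \<le> nB"
  shows "exp (-2*a*nA - 2*b*nB) \<le> (\<Prod>j\<in>Gi. 1 - (if j \<in> X then a else b))"
proof -
  have split: "Gi = (Gi \<inter> X) \<union> (Gi \<inter> Y)" using sub by blast
  have disj: "(Gi \<inter> X) \<inter> (Gi \<inter> Y) = {}" using XY by blast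
  have "(\<Prod>j\<in>Gi. 1 - (if j \<in> X then a else b)) =
      (\<Prod>j\<in>Gi \<inter> X. 1 - (if j \<in> X then a else b)) * (\<Prod>j\<in>Gi \<inter> Y. 1 - (if j \<in> X then a else b))"
  proof -
    have f1: "finite (Gi \<inter> X)" "finite (Gi \<inter> Y)" using fin by auto
    have "(\<Prod>j\<in>(Gi \<inter> X) \<union> (Gi \<inter> Y). 1 - (if j \<in> X then a else b)) =
      (\<Prod>j\<in>Gi \<inter> X. 1 - (if j \<in> X then a else b)) * (\<Prod>j\<in>Gi \<inter> Y. 1 - (if j \<in> X then a else b))"
      by (rule prod.union_disjoint[OF f1 disj])
    thus ?thesis using split by simp
  qed
  also have "(\<Prod>j\<in>Gi \<inter> X. 1 - (if j \<in> X then a else b)) = (1 - a) ^ card (Gi \<inter> X)"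
  proof -
    have "(\<Prod>j\<in>Gi \<inter> X. 1 - (if j \<in> X then a else b)) = (\<Prod>j\<in>Gi \<inter> X. 1 - a)"
      by (rule prod.cong) auto
    thus ?thesis by simp
  qed
  also have "(\<Prod>j\<in>Gi \<inter> Y. 1 - (if j \<in> X then a else b)) = (1 - b) ^ card (Gi \<inter> Y)"
  proof -
    have "(\<Prod>j\<in>Gi \<inter> Y. 1 - (if j \<in> X then a else b)) = (\<Prod>j\<in>Gi \<inter> Y. 1 - b)"
      by (rule prod.cong) (use XY in auto)
    thus ?thesis by simp
  qed
  finally have eq: "(\<Prod>j\<in>Gi. 1 - (if j \<in> X then a else b)) = (1 - a) ^ card (Gi \<inter> X) * (1 - b) ^ card (Gi \<inter> Y)" .
  have e1: "exp (-2*a*nA) \<le> (1 - a) ^ card (Gi \<inter> X)"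
  proof -
    have "exp (-2*a*nA) \<le> exp (-2*a*real (card (Gi \<inter> X)))" using cA a by (simp add: mult_left_mono)
    also have "\<dots> \<le> (1 - a) ^ card (Gi \<inter> X)" by (rule pow_one_minus_ge_exp) (use a in auto)
    finally show ?thesis .
  qed
  have e2: "exp (-2*b*nB) \<le> (1 - b) ^ card (Gi \<inter> Y)"
  proof -
    have "exp (-2*b*nB) \<le> exp (-2*b*real (card (Gi \<inter> Y)))" using cB b by (simp add: mult_left_mono)
    also have "\<dots> \<le> (1 - b) ^ card (Gi \<inter> Y)" by (rule pow_one_minus_ge_exp) (use b in auto)
    finally show ?thesis .
  qed
  have "exp (-2*a*nA - 2*b*nB) = exp (-2*a*nA) * exp (-2*b*nB)" using exp_add[of "-2*a*nA" "-2*b*nB"] by simp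
  also have "\<dots> \<le> (1 - a) ^ card (Gi \<inter> X) * (1 - b) ^ card (Gi \<inter> Y)"
    by (rule mult_mono[OF e1 e2]) (use a b in auto)
  finally show ?thesis using eq by simp
qed

context pairing begin

lemma count_gen:
  fixes \<beta> :: real
  assumes N0X: "N0 \<subseteq> X" and fin: "\<forall>u\<in>X. finite (R u)" and bnd: "\<forall>u\<in>X. real (card (R u)) \<le> \<beta>"
    and b0: "\<beta> \<ge> 0"
    and cov: "\<forall>j\<in>S. \<exists>u\<in>X. pr u \<in> pr ` N0 \<and> j \<in> R u"
  shows "real (card S) \<le> 2 * real (card N0) * \<beta>"
proof -
  define Q where "Q = {u\<in>X. pr u \<in> pr ` N0}"
  have fQ: "finite Q" using finX by (simp add: Q_def)
  have QX: "Q \<subseteq> X" by (auto simp: Q_def)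
  have "S \<subseteq> (\<Union>u\<in>Q. R u)"
  proof
    fix j assume "j \<in> S"
    then obtain u where "u \<in> X" "pr u \<in> pr ` N0" "j \<in> R u" using cov by blast
    then show "j \<in> (\<Union>u\<in>Q. R u)" unfolding Q_def by blast
  qed
  moreover have "finite (\<Union>u\<in>Q. R u)" using fQ fin QX by auto
  ultimately have "card S \<le> card (\<Union>u\<in>Q. R u)" by (rule card_mono[rotated])
  also have "\<dots> \<le> (\<Sum>u\<in>Q. card (R u))" by (rule card_UN_le[OF fQ])
  finally have h: "card S \<le> (\<Sum>u\<in>Q. card (R u))" .
  have "real (card S) \<le> real (\<Sum>u\<in>Q. card (R u))" using h by (simp only: of_nat_le_iff)
  also have "\<dots> = (\<Sum>u\<in>Q. real (card (R u)))" by simp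
  also have "\<dots> \<le> (\<Sum>u\<in>Q. \<beta>)" by (rule sum_mono) (use bnd QX in auto)
  also have "\<dots> = real (card Q) * \<beta>" by simp
  also have "\<dots> \<le> real (2 * card N0) * \<beta>"
    using Q_card[OF N0X] b0 by (intro mult_right_mono) (auto simp: Q_def)
  finally show ?thesis by simp
qed

lemma sv_pm: "sv f u = 1 \<or> sv f u = -1"
  by (auto simp: sv_def sg_def)

lemma sum_sides:
  fixes f :: "nat \<Rightarrow> bool"
  assumes NX: "N \<subseteq> X"
  defines "X1 \<equiv> {u\<in>X. sv f u = 1}" and "X2 \<equiv> {u\<in>X. sv f u \<noteq> 1}"
  shows "(\<Sum>u\<in>N. sv f u) = real (card (N \<inter> X1)) - real (card (N \<inter> X2))"
    and "card (N \<inter> X1) + card (N \<inter> X2) = card N"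
proof -
  have fN: "finite N" using NX finX by (metis finite_subset)
  have split: "N = (N \<inter> X1) \<union> (N \<inter> X2)" using NX by (auto simp: X1_def X2_def)
  have disj: "(N \<inter> X1) \<inter> (N \<inter> X2) = {}" by (auto simp: X1_def X2_def)
  have f1: "finite (N \<inter> X1)" "finite (N \<inter> X2)" using fN by auto
  have "(\<Sum>u\<in>(N \<inter> X1) \<union> (N \<inter> X2). sv f u) = (\<Sum>u\<in>N \<inter> X1. sv f u) + (\<Sum>u\<in>N \<inter> X2. sv f u)"
    by (rule sum.union_disjoint[OF f1 disj])
  hence "(\<Sum>u\<in>N. sv f u) = (\<Sum>u\<in>N \<inter> X1. sv f u) + (\<Sum>u\<in>N \<inter> X2. sv f u)"
    using split by simp
  also have "(\<Sum>u\<in>N \<inter> X1. sv f u) = (\<Sum>u\<in>N \<inter> X1. 1)" by (rule sum.cong) (auto simp: X1_def)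
  also have "(\<Sum>u\<in>N \<inter> X2. sv f u) = (\<Sum>u\<in>N \<inter> X2. -1)"
    by (rule sum.cong) (use sv_pm in \<open>auto simp: X2_def\<close>)
  finally show "(\<Sum>u\<in>N. sv f u) = real (card (N \<inter> X1)) - real (card (N \<inter> X2))" by simp
  show "card (N \<inter> X1) + card (N \<inter> X2) = card N"
    using card_Un_disjoint[OF f1 disj] split by simp
qed

end

context pairing begin

lemma main:
  fixes D q \<epsilon> :: real and d' :: nat and Y :: "nat set" and H GX :: "nat \<Rightarrow> nat \<Rightarrow> bool"
  assumes D: "D \<ge> 10^12" and q: "q \<ge> 64" and dq: "real d' = q^3" and dD: "real d' \<le> D"
    and eps: "0 < \<epsilon>" "\<epsilon> \<le> 5/8"
    and XY: "X \<inter> Y = {}" and finY: "finite Y"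
    and Hs: "\<forall>u v. H u v \<longrightarrow> H v u"
    and HXY: "\<forall>u v. H u v \<longrightarrow> (u \<in> X \<and> v \<in> Y) \<or> (u \<in> Y \<and> v \<in> X)"
    and degH: "\<forall>v \<in> X \<union> Y. D/2 - D/10^4 \<le> real (deg H v) \<and> real (deg H v) \<le> D/2 + D/10^4"
    and finH: "\<forall>v. finite (nbhd H v)"
    and GXs: "simple_graph_on X GX"
    and degG: "\<forall>x\<in>X. (1-\<epsilon>)*real d' \<le> real (deg GX x) \<and> real (deg GX x) \<le> (1+\<epsilon>)*real d'"
  shows "\<exists>X' X''. X' \<union> X'' = X \<and> X' \<inter> X'' = {} \<and>
           (\<forall>x \<in> X. (1 - 2 / q) * (real (deg GX x) / 2) \<le> real (deg (bip_sub GX X' X'') x)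
                     \<and> real (deg (bip_sub GX X' X'') x) \<le> (1 + 2 / q) * (real (deg GX x) / 2)) \<and>
           d_good (D / 5) Y H X' X''"
proof -
  define I where "I = X \<union> Y"
  define N where "N i = (if i \<in> X then nbhd GX i else nbhd H i)" for i
  define tu where "tu i = (if i \<in> X then (2/q) * real (deg GX i) else real (deg H i) - 2*D/5)" for i
  define \<Omega> where "\<Omega> = Om {0..<m}"
  define A where "A i = Ev (N i) (tu i)" for i
  define G where "G i = {j \<in> I. j \<noteq> i \<and> pr ` N j \<inter> pr ` N i \<noteq> {}}" for i
  define xA where "xA = 4 * exp (-(3*q/4))"
  define xB where "xB = exp (-(D/500))"
  define xw where "xw i = (if i \<in> X then xA else xB)" for i
  have GXsym: "\<forall>u v. GX u v \<longrightarrow> GX v u" and GXin: "\<forall>u v. GX u v \<longrightarrow> u \<in> X \<and> v \<in> X"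
    using GXs by (auto simp: simple_graph_on_def)
  have finGX: "finite (nbhd GX u)" for u
  proof -
    have "nbhd GX u \<subseteq> X" using GXin by (auto simp: nbhd_def)
    thus ?thesis using finX by (rule finite_subset)
  qed
  have q0: "q > 0" using q by simp
  have D0: "D > 0" using D by simp
  have q3D: "q^3 \<le> D" using dq dD by simp
  have n1: "q^6 * exp (-(3*q/4)) \<le> 1/200" by (rule num1[OF q])
  have n2: "q^3 * exp (-(3*q/4)) \<le> 1/10^6" by (rule num2[OF q])
  have n3: "D^2 * exp (-(D/500)) \<le> 1/100" by (rule num3[OF D])
  have q31: "q^3 \<ge> 1" using q by (simp add: one_le_power)
  have D21: "D^2 \<ge> 1" using D by (simp add: one_le_power)
  have eq0: "exp (-(3*q/4)) \<le> 1/10^6"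
  proof -
    have "exp (-(3*q/4)) \<le> q^3 * exp (-(3*q/4))" using q31 q0 by (simp add: mult_le_cancel_right1)
    thus ?thesis using n2 by linarith
  qed
  have eD0: "exp (-(D/500)) \<le> 1/100"
  proof -
    have "exp (-(D/500)) \<le> D^2 * exp (-(D/500))" using D21 by (simp add: mult_le_cancel_right1)
    thus ?thesis using n3 by linarith
  qed
  have xA0: "0 \<le> xA" "xA \<le> 1/2" using eq0 by (auto simp: xA_def)
  have xB0: "0 \<le> xB" "xB \<le> 1/2" using eD0 by (auto simp: xB_def)
  have NX: "N i \<subseteq> X" if "i \<in> I" for i
  proof (cases "i \<in> X")
    case True thus ?thesis using GXin by (auto simp: N_def nbhd_def)
  next
    case False
    hence "i \<in> Y" using that by (auto simp: I_def)
    thus ?thesis using False HXY XY by (auto simp: N_def nbhd_def)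
  qed
  have cardN: "card (N i) = (if i \<in> X then deg GX i else deg H i)" for i
    by (simp add: N_def deg_def)
  have degGq: "(3/8) * q^3 \<le> real (deg GX x) \<and> real (deg GX x) \<le> (13/8) * q^3" if "x \<in> X" for x
  proof -
    have "(1-\<epsilon>)*real d' \<le> real (deg GX x)" "real (deg GX x) \<le> (1+\<epsilon>)*real d'" using degG that by auto
    moreover have "(3/8) * q^3 \<le> (1-\<epsilon>)*q^3" using eps q31 q by (intro mult_right_mono) auto
    moreover have "(1+\<epsilon>)*q^3 \<le> (13/8) * q^3" using eps q31 q by (intro mult_right_mono) auto
    ultimately show ?thesis using dq by simp
  qed
  have degHD: "real (deg H v) \<le> D" if "v \<in> X \<union> Y" for v
    using degH that D0 by force
  have finI: "finite I" using finX finY by (simp add: I_def)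
  have finO: "finite \<Omega>" unfolding \<Omega>_def by (rule finite_Om) simp
  have detA: "determ {0..<m} (pr ` N i) (A i)" if "i \<in> I" for i
    unfolding A_def by (rule determ_Ev[OF NX[OF that]])
  have prV: "pr ` N i \<subseteq> {0..<m}" if "i \<in> I" for i
    using NX[OF that] pr_lt by auto
  have indep_h: "\<forall>i\<in>I. \<forall>T. T \<subseteq> I \<longrightarrow> i \<notin> T \<longrightarrow> T \<inter> G i = {} \<longrightarrow>
        real (card (A i \<inter> (\<Omega> - \<Union>(A ` T)))) * card \<Omega> = real (card (A i)) * card (\<Omega> - \<Union>(A ` T))"
  proof (intro ballI allI impI)
    fix i T assume i: "i \<in> I" and T: "T \<subseteq> I" and iT: "i \<notin> T" and TG: "T \<inter> G i = {}"
    have dC: "determ {0..<m} (\<Union>j\<in>T. pr ` N j) (\<Omega> - \<Union>(A ` T))"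
      unfolding \<Omega>_def by (rule determ_C) (use detA T in blast)
    have disj: "pr ` N i \<inter> (\<Union>j\<in>T. pr ` N j) = {}"
    proof (rule ccontr)
      assume "pr ` N i \<inter> (\<Union>j\<in>T. pr ` N j) \<noteq> {}"
      then obtain j where j: "j \<in> T" "pr ` N j \<inter> pr ` N i \<noteq> {}" by blast
      hence "j \<in> G i" using T iT by (auto simp: G_def)
      thus False using TG j by blast
    qed
    have "card (A i \<inter> (\<Omega> - \<Union>(A ` T))) * card \<Omega> = card (A i) * card (\<Omega> - \<Union>(A ` T))"
      unfolding \<Omega>_def
      by (rule indep[OF _ prV[OF i] _ disj detA[OF i] dC[unfolded \<Omega>_def]]) (use prV T in auto)
    thus "real (card (A i \<inter> (\<Omega> - \<Union>(A ` T)))) * card \<Omega> = real (card (A i)) * card (\<Omega> - \<Union>(A ` T))"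
      by (metis of_nat_mult)
  qed
  have cntX: "real (card (G i \<inter> X)) \<le> 2 * real (card (N i)) * ((13/8) * q^3)" if i: "i \<in> I" for i
  proof (rule count_gen[OF NX[OF i]])
    show "\<forall>u\<in>X. finite (nbhd GX u)" using finGX by simp
    show "\<forall>u\<in>X. real (card (nbhd GX u)) \<le> (13/8) * q^3" using degGq by (auto simp: deg_def)
    show "(13/8) * q^3 \<ge> 0" using q31 q0 by simp
    show "\<forall>j\<in>G i \<inter> X. \<exists>u\<in>X. pr u \<in> pr ` N i \<and> j \<in> nbhd GX u"
    proof
      fix j assume j: "j \<in> G i \<inter> X"
      then obtain k where k: "k \<in> pr ` N j" "k \<in> pr ` N i" by (auto simp: G_def)
      then obtain u where u: "u \<in> N j" "pr u = k" by blast
      have "GX j u" using u j by (simp add: N_def nbhd_def)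
      hence "u \<in> X" "GX u j" using GXin GXsym by auto
      thus "\<exists>u\<in>X. pr u \<in> pr ` N i \<and> j \<in> nbhd GX u" using u k by (auto simp: nbhd_def)
    qed
  qed
  have cntY: "real (card (G i \<inter> Y)) \<le> 2 * real (card (N i)) * D" if i: "i \<in> I" for i
  proof (rule count_gen[OF NX[OF i]])
    show "\<forall>u\<in>X. finite (nbhd H u)" using finH by simp
    show "\<forall>u\<in>X. real (card (nbhd H u)) \<le> D" using degHD by (auto simp: deg_def)
    show "D \<ge> 0" using D0 by simp
    show "\<forall>j\<in>G i \<inter> Y. \<exists>u\<in>X. pr u \<in> pr ` N i \<and> j \<in> nbhd H u"
    proof
      fix j assume j: "j \<in> G i \<inter> Y"
      then obtain k where k: "k \<in> pr ` N j" "k \<in> pr ` N i" by (auto simp: G_def)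
      then obtain u where u: "u \<in> N j" "pr u = k" by blast
      have jX: "j \<notin> X" using j XY by auto
      have "H j u" using u jX by (simp add: N_def nbhd_def)
      hence "u \<in> X" "H u j" using HXY Hs jX by auto
      thus "\<exists>u\<in>X. pr u \<in> pr ` N i \<and> j \<in> nbhd H u" using u k by (auto simp: nbhd_def)
    qed
  qed
  have finG: "finite (G i)" for i using finI by (simp add: G_def)
  have GsubI: "G i \<subseteq> X \<union> Y" for i by (auto simp: G_def I_def)
  have bound: "\<forall>i\<in>I. real (card (A i)) \<le> xw i * (\<Prod>j\<in>G i. 1 - xw j) * card \<Omega>"
  proof
    fix i assume i: "i \<in> I"
    have NXi: "N i \<subseteq> X" by (rule NX[OF i])
    show "real (card (A i)) \<le> xw i * (\<Prod>j\<in>G i. 1 - xw j) * card \<Omega>"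
    proof (cases "i \<in> X")
      case True
      define M where "M = real (deg GX i)"
      have cN: "real (card (N i)) = M" using True by (simp add: cardN M_def)
      have M: "(3/8) * q^3 \<le> M" "M \<le> (13/8) * q^3" using degGq[OF True] by (auto simp: M_def)
      have M0: "M > 0" using M q31 q0 by linarith
      have c1: "real (card (A i)) \<le> 2 * exp (-((tu i)^2)/(2*M)) * card \<Omega>"
        unfolding A_def \<Omega>_def by (rule chern[OF NXi]) (use True q0 M0 cN in \<open>auto simp: tu_def M_def\<close>)
      have c2a: "-((tu i)^2)/(2*M) = -(2*M/q^2)" using True M0 q0 by (simp add: tu_def M_def field_simps power2_eq_square)
      have c2b: "-(2*M/q^2) \<le> -(3*q/4)"
      proof -
        have "(3/4)*q * q^2 \<le> 2*M" using M(1) by (simp add: power2_eq_square power3_eq_cube algebra_simps)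
        hence "(3/4)*q \<le> 2*M/q^2" using q0 by (simp add: field_simps)
        thus ?thesis by simp
      qed
      have c2: "2 * exp (-((tu i)^2)/(2*M)) * card \<Omega> \<le> 2 * exp (-(3*q/4)) * card \<Omega>"
        using c2a c2b by (intro mult_right_mono mult_left_mono) auto
      have c3a: "2 * exp (-(3*q/4)) = xA * (1/2)" by (simp add: xA_def)
      have c3b: "xA * (1/2) \<le> xA * exp (-2*xA*(2*((13/8) * q^3)*((13/8) * q^3)) - 2*xB*(2*((13/8) * q^3)*D))"
      proof -
        have "2*xA*(2*((13/8) * q^3)*((13/8) * q^3)) = (169/4) * q^6 * exp (-(3*q/4))"
          by (simp add: xA_def power_def algebra_simps numeral_eq_Suc)
        also have "\<dots> \<le> (169/4) * (1/200)" using n1 by simp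
        finally have a1: "2*xA*(2*((13/8) * q^3)*((13/8) * q^3)) \<le> 169/800" by simp
        have "2*xB*(2*((13/8) * q^3)*D) \<le> 2*xB*(2*((13/8) * D)*D)"
          using xB0 q3D D0 by (intro mult_left_mono mult_right_mono) auto
        also have "\<dots> = (13/2) * (D^2 * exp (-(D/500)))" by (simp add: xB_def power2_eq_square)
        also have "\<dots> \<le> (13/2) * (1/100)" using n3 by simp
        finally have a2: "2*xB*(2*((13/8) * q^3)*D) \<le> (13/2) * (1/100)" .
        have "1/2 \<le> 1 - (2*xA*(2*((13/8) * q^3)*((13/8) * q^3)) + 2*xB*(2*((13/8) * q^3)*D))"
          using a1 a2 by linarith
        also have "\<dots> \<le> exp (-(2*xA*(2*((13/8) * q^3)*((13/8) * q^3)) + 2*xB*(2*((13/8) * q^3)*D)))"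
          using exp_ge_add_one_self[of "-(2*xA*(2*((13/8) * q^3)*((13/8) * q^3)) + 2*xB*(2*((13/8) * q^3)*D))"] by linarith
        also have "exp (-(2*xA*(2*((13/8) * q^3)*((13/8) * q^3)) + 2*xB*(2*((13/8) * q^3)*D))) = exp (-2*xA*(2*((13/8) * q^3)*((13/8) * q^3)) - 2*xB*(2*((13/8) * q^3)*D))"
          by (simp add: algebra_simps)
        finally show ?thesis using xA0 by (intro mult_left_mono) auto
      qed
      have c4: "exp (-2*xA*(2*((13/8) * q^3)*((13/8) * q^3)) - 2*xB*(2*((13/8) * q^3)*D)) \<le> (\<Prod>j\<in>G i. 1 - xw j)"
        unfolding xw_def
      proof (rule prod_bound[OF finG GsubI XY xA0 xB0])
        show "real (card (G i \<inter> X)) \<le> 2*((13/8) * q^3)*((13/8) * q^3)"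
        proof -
          have "2 * M * ((13/8) * q^3) \<le> 2*((13/8) * q^3)*((13/8) * q^3)"
            using M(2) q0 by (intro mult_right_mono) auto
          thus ?thesis using cntX[OF i, unfolded cN] by linarith
        qed
        show "real (card (G i \<inter> Y)) \<le> 2*((13/8) * q^3)*D"
        proof -
          have "2 * M * D \<le> 2*((13/8) * q^3)*D"
            using M(2) D0 by (intro mult_right_mono) auto
          thus ?thesis using cntY[OF i, unfolded cN] by linarith
        qed
      qed
      have "xA * exp (-2*xA*(2*((13/8) * q^3)*((13/8) * q^3)) - 2*xB*(2*((13/8) * q^3)*D)) * card \<Omega> \<le> xA * (\<Prod>j\<in>G i. 1 - xw j) * card \<Omega>"
        using c4 xA0 by (intro mult_right_mono mult_left_mono) auto
      moreover have "2 * exp (-(3*q/4)) * card \<Omega> \<le> xA * exp (-2*xA*(2*((13/8) * q^3)*((13/8) * q^3)) - 2*xB*(2*((13/8) * q^3)*D)) * card \<Omega>"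
        using c3a c3b by (intro mult_right_mono) auto
      moreover have xwi: "xw i = xA" using True by (simp add: xw_def)
      ultimately show ?thesis unfolding xwi using c1 c2 by linarith
    next
      case False
      hence iY: "i \<in> Y" using i by (auto simp: I_def)
      define k where "k = real (deg H i)"
      have cN: "real (card (N i)) = k" using False by (simp add: cardN k_def)
      have k: "D/2 - D/10^4 \<le> k" "k \<le> D" using degH degHD i by (auto simp: k_def I_def)
      have tau: "tu i = k - 2*D/5" using False by (simp add: tu_def k_def)
      have tD: "D/11 \<le> tu i" using k tau by simp
      have c1: "real (card (A i)) \<le> 2 * exp (-((tu i)^2)/(2*D)) * card \<Omega>"
        unfolding A_def \<Omega>_def by (rule chern[OF NXi]) (use tD D0 cN k in auto)
      have c2: "2 * exp (-((tu i)^2)/(2*D)) * card \<Omega> \<le> 2 * exp (-(D/242)) * card \<Omega>"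
      proof -
        have "(D/11)^2 \<le> (tu i)^2" using tD D0 by (intro power_mono) auto
        hence "D/242 \<le> (tu i)^2/(2*D)" using D0 by (simp add: field_simps power2_eq_square)
        thus ?thesis by (intro mult_right_mono mult_left_mono) auto
      qed
      have c3: "2 * exp (-(D/242)) \<le> xB * exp (-2*xA*(2*D*((13/8) * q^3)) - 2*xB*(2*D*D))"
      proof -
        have y1: "2*xA*(2*D*((13/8) * q^3)) = 26 * D * (q^3 * exp (-(3*q/4)))" by (simp add: xA_def)
        have y1b: "26 * D * (q^3 * exp (-(3*q/4))) \<le> 26 * D * (1/10^6)" using n2 D0 by (intro mult_left_mono) auto
        have y2: "2*xB*(2*D*D) = 4 * (D^2 * exp (-(D/500)))" by (simp add: xB_def power2_eq_square)
        have y2b: "4 * (D^2 * exp (-(D/500))) \<le> 4 * (1/100)" using n3 by simp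
        have e2: "2 \<le> exp (1::real)" using exp_ge_add_one_self[of 1] by simp
        have "2 * exp (-(D/242)) \<le> exp 1 * exp (-(D/242))" using e2 by (intro mult_right_mono) auto
        also have "\<dots> = exp (1 - D/242)" using exp_add[of 1 "-(D/242)"] by simp
        also have "\<dots> \<le> exp (-(D/500) + (-2*xA*(2*D*((13/8) * q^3)) - 2*xB*(2*D*D)))"
        proof -
          have m1: "-2*xA*(2*D*((13/8) * q^3)) = -(2*xA*(2*D*((13/8) * q^3)))" by simp
          have m2: "-2*xB*(2*D*D) = -(2*xB*(2*D*D))" by simp
          have z1a: "2*xA*(2*D*((13/8) * q^3)) \<le> 26 * D * (1/10^6)" using y1 y1b by (rule ord_eq_le_trans)
          have e1: "26 * D * (1/10^6) = D * (26/1000000)" by simp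
          have z1: "2*xA*(2*D*((13/8) * q^3)) \<le> D * (26/1000000)" using z1a e1 by linarith
          have z2a: "2*xB*(2*D*D) \<le> 4 * (1/100)" using y2 y2b by (rule ord_eq_le_trans)
          have z2: "2*xB*(2*D*D) \<le> 1/25" using z2a by linarith
          have z3: "D \<ge> 1000000000000" using D by simp
          show ?thesis unfolding m1 using z1 z2 z3 by (subst exp_le_cancel_iff) linarith
        qed
        also have "\<dots> = xB * exp (-2*xA*(2*D*((13/8) * q^3)) - 2*xB*(2*D*D))"
          by (simp only: exp_add xB_def)
        finally show ?thesis .
      qed
      hence c3': "2 * exp (-(D/242)) * card \<Omega> \<le> xB * exp (-2*xA*(2*D*((13/8) * q^3)) - 2*xB*(2*D*D)) * card \<Omega>"
        by (intro mult_right_mono) auto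
      have c4: "exp (-2*xA*(2*D*((13/8) * q^3)) - 2*xB*(2*D*D)) \<le> (\<Prod>j\<in>G i. 1 - xw j)"
        unfolding xw_def
      proof (rule prod_bound[OF finG GsubI XY xA0 xB0])
        show "real (card (G i \<inter> X)) \<le> 2*D*((13/8) * q^3)"
        proof -
          have "2 * k * ((13/8) * q^3) \<le> 2*D*((13/8) * q^3)"
            using k(2) q0 by (intro mult_right_mono) auto
          thus ?thesis using cntX[OF i, unfolded cN] by linarith
        qed
        show "real (card (G i \<inter> Y)) \<le> 2*D*D"
        proof -
          have "2 * k * D \<le> 2*D*D"
            using k(2) D0 by (intro mult_right_mono) auto
          thus ?thesis using cntY[OF i, unfolded cN] by linarith
        qed
      qed
      have "xB * exp (-2*xA*(2*D*((13/8) * q^3)) - 2*xB*(2*D*D)) * card \<Omega> \<le> xB * (\<Prod>j\<in>G i. 1 - xw j) * card \<Omega>"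
        using c4 xB0 by (intro mult_right_mono mult_left_mono) auto
      moreover have xwi: "xw i = xB" using False by (simp add: xw_def)
      ultimately show ?thesis unfolding xwi using c1 c2 c3' by linarith
    qed
  qed
  have x01: "\<forall>i\<in>I. 0 \<le> xw i \<and> xw i < 1" using xA0 xB0 by (auto simp: xw_def)
  have GI: "\<forall>i\<in>I. G i \<subseteq> I \<and> i \<notin> G i" by (auto simp: G_def)
  have LL: "(\<Prod>i\<in>I. 1 - xw i) * card \<Omega> \<le> card (\<Omega> - \<Union>(A ` I))"
    by (rule lll[OF finO finI GI x01 indep_h bound])
  have "(\<lambda>_. False) \<in> \<Omega>" by (simp add: \<Omega>_def Om_def)
  hence cO: "card \<Omega> > 0" using finO card_gt_0_iff by blast
  have pP: "(\<Prod>i\<in>I. 1 - xw i) > 0" using x01 by (intro prod_pos) auto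
  have "0 < (\<Prod>i\<in>I. 1 - xw i) * real (card \<Omega>)" using cO pP by (intro mult_pos_pos) auto
  hence "0 < real (card (\<Omega> - \<Union>(A ` I)))" using LL by linarith
  hence "\<Omega> - \<Union>(A ` I) \<noteq> {}" by (intro notI) simp
  then obtain f where f0: "f \<in> \<Omega> - \<Union>(A ` I)" by blast
  have f: "f \<in> \<Omega>" "\<forall>i\<in>I. f \<notin> A i" using f0 by auto
  have good: "\<bar>\<Sum>u\<in>N i. sv f u\<bar> \<le> tu i" if "i \<in> I" for i
    using f that by (auto simp: A_def Ev_def \<Omega>_def)
  define X1 where "X1 = {u\<in>X. sv f u = 1}"
  define X2 where "X2 = {u\<in>X. sv f u \<noteq> 1}"
  have ss: "(\<Sum>u\<in>M. sv f u) = real (card (M \<inter> X1)) - real (card (M \<inter> X2))"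
     "card (M \<inter> X1) + card (M \<inter> X2) = card M" if "M \<subseteq> X" for M
    using sum_sides[OF that, of f] by (simp_all add: X1_def X2_def)
  show ?thesis
  proof (intro exI conjI)
    show "X1 \<union> X2 = X" "X1 \<inter> X2 = {}" by (auto simp: X1_def X2_def)
    show "\<forall>x\<in>X. (1 - 2 / q) * (real (deg GX x) / 2) \<le> real (deg (bip_sub GX X1 X2) x)
            \<and> real (deg (bip_sub GX X1 X2) x) \<le> (1 + 2 / q) * (real (deg GX x) / 2)"
    proof
      fix x assume x: "x \<in> X"
      have xI: "x \<in> I" using x by (simp add: I_def)
      have NXx: "N x = nbhd GX x" using x by (simp add: N_def)
      define a where "a = real (card (nbhd GX x \<inter> X1))"
      define b where "b = real (card (nbhd GX x \<inter> X2))"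
      define c where "c = (2/q) * real (deg GX x)"
      have ab: "a + b = real (deg GX x)" using ss(2)[OF NX[OF xI]] NXx by (simp add: a_def b_def deg_def flip: of_nat_add)
      have amb: "\<bar>a - b\<bar> \<le> c" using good[OF xI] ss(1)[OF NX[OF xI]] NXx x by (simp add: a_def b_def c_def tu_def)
      have l: "(1 - 2 / q) * (real (deg GX x) / 2) = real (deg GX x)/2 - c/2" using q0 by (simp add: c_def field_simps)
      have u: "(1 + 2 / q) * (real (deg GX x) / 2) = real (deg GX x)/2 + c/2" using q0 by (simp add: c_def field_simps)
      have "real (deg (bip_sub GX X1 X2) x) = (if x \<in> X1 then b else a)"
      proof (cases "x \<in> X1")
        case True
        hence "x \<notin> X2" by (auto simp: X1_def X2_def)
        hence "nbhd (bip_sub GX X1 X2) x = nbhd GX x \<inter> X2" using True by (auto simp: nbhd_def bip_sub_def)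
        thus ?thesis using True by (simp add: deg_def b_def)
      next
        case False
        hence "x \<in> X2" using x by (auto simp: X1_def X2_def)
        hence "nbhd (bip_sub GX X1 X2) x = nbhd GX x \<inter> X1" using False by (auto simp: nbhd_def bip_sub_def)
        thus ?thesis using False by (simp add: deg_def a_def)
      qed
      thus "(1 - 2 / q) * (real (deg GX x) / 2) \<le> real (deg (bip_sub GX X1 X2) x)
            \<and> real (deg (bip_sub GX X1 X2) x) \<le> (1 + 2 / q) * (real (deg GX x) / 2)"
        using ab amb l u by (auto split: if_splits)
    qed
    show "d_good (D / 5) Y H X1 X2"
      unfolding d_good_def
    proof (intro conjI ballI)
      have "X \<inter> X1 = X1" "X \<inter> X2 = X2" by (auto simp: X1_def X2_def)
      hence "\<bar>real (card X1) - real (card X2)\<bar> \<le> 1" using ss(1)[of X] balance[of f] by simp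
      thus "\<bar>int (card X1) - int (card X2)\<bar> \<le> 1" by linarith
    next
      fix y assume y: "y \<in> Y"
      have yI: "y \<in> I" and yX: "y \<notin> X" using y XY by (auto simp: I_def)
      have NXy: "N y = nbhd H y" using yX by (simp add: N_def)
      have ab: "real (card (nbhd H y \<inter> X1)) + real (card (nbhd H y \<inter> X2)) = real (deg H y)"
        using ss(2)[OF NX[OF yI]] NXy by (simp add: deg_def flip: of_nat_add)
      have amb: "\<bar>real (card (nbhd H y \<inter> X1)) - real (card (nbhd H y \<inter> X2))\<bar> \<le> real (deg H y) - 2*D/5"
        using good[OF yI] ss(1)[OF NX[OF yI]] NXy yX by (simp add: tu_def)
      show "D / 5 \<le> real (card (nbhd H y \<inter> X1))" "D / 5 \<le> real (card (nbhd H y \<inter> X2))"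
        using ab amb by linarith+
    qed
  qed
qed

end

lemma cube_powr:
  fixes x :: real assumes "0 \<le> x" shows "(x powr (1/3))^3 = x"
proof (cases "x = 0")
  case True then show ?thesis by simp
next
  case False
  hence x: "x > 0" using assms by simp
  have "(x powr (1/3))^3 = (x powr (1/3)) powr (real 3)"
    using x by (subst powr_realpow) auto
  also have "\<dots> = x powr (1/3 * real 3)" by (rule powr_powr)
  also have "\<dots> = x" using x by simp
  finally show ?thesis .
qed

lemma sq_powr:
  fixes x :: real assumes "0 \<le> x" shows "x powr (2/3) = (x powr (1/3))^2"
proof (cases "x = 0")
  case True then show ?thesis by simp
next
  case False
  hence x: "x > 0" using assms by simp
  have "(x powr (1/3))^2 = (x powr (1/3)) powr (real 2)"
    using x by (subst powr_realpow) auto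
  also have "\<dots> = x powr (1/3 * real 2)" by (rule powr_powr)
  also have "\<dots> = x powr (2/3)" by simp
  finally show ?thesis by simp
qed

lemma cube_ge:
  fixes z c :: real assumes "0 \<le> z" "0 \<le> c" "c^3 \<le> z^3" shows "c \<le> z"
  using assms power_less_imp_less_base[of z 3 c] by force

theorem lemma3p3:
  "\<exists>d0::nat. d0 > 0 \<and> (\<forall>d::nat. d \<ge> d0 \<longrightarrow>
     (\<forall>(\<epsilon>::real) (d'::nat) (n::nat) X Y H GX.
        0 < \<epsilon> \<longrightarrow> \<epsilon> \<le> 5/8 \<longrightarrow> 2^18 \<le> d' \<longrightarrow> d' \<le> d \<longrightarrow>
        n > 0 \<longrightarrow> even n \<longrightarrow>
        balanced_bipartite_on n X Y H \<longrightarrow>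
        (\<forall>v \<in> {1..n}. real d / 2 - real d powr (2/3) \<le> real (deg H v)
                        \<and> real (deg H v) \<le> real d / 2 + real d powr (2/3)) \<longrightarrow>
        simple_graph_on X GX \<longrightarrow>
        (\<forall>x \<in> X. (1 - \<epsilon>) * real d' \<le> real (deg GX x)
                  \<and> real (deg GX x) \<le> (1 + \<epsilon>) * real d') \<longrightarrow>
        (\<exists>X' X''. X' \<union> X'' = X \<and> X' \<inter> X'' = {} \<and>
           (\<forall>x \<in> X. (1 - 2 / real d' powr (1/3)) * (real (deg GX x) / 2)
                       \<le> real (deg (bip_sub GX X' X'') x)
                     \<and> real (deg (bip_sub GX X' X'') x)
                       \<le> (1 + 2 / real d' powr (1/3)) * (real (deg GX x) / 2)) \<and>
           d_good (real d / 5) Y H X' X'')))"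
proof -
  have main': "\<forall>(\<epsilon>::real) (d'::nat) (n::nat) X Y H GX.
        0 < \<epsilon> \<longrightarrow> \<epsilon> \<le> 5/8 \<longrightarrow> 2^18 \<le> d' \<longrightarrow> d' \<le> d \<longrightarrow>
        n > 0 \<longrightarrow> even n \<longrightarrow>
        balanced_bipartite_on n X Y H \<longrightarrow>
        (\<forall>v \<in> {1..n}. real d / 2 - real d powr (2/3) \<le> real (deg H v)
                        \<and> real (deg H v) \<le> real d / 2 + real d powr (2/3)) \<longrightarrow>
        simple_graph_on X GX \<longrightarrow>
        (\<forall>x \<in> X. (1 - \<epsilon>) * real d' \<le> real (deg GX x)
                  \<and> real (deg GX x) \<le> (1 + \<epsilon>) * real d') \<longrightarrow>
        (\<exists>X' X''. X' \<union> X'' = X \<and> X' \<inter> X'' = {} \<and>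
           (\<forall>x \<in> X. (1 - 2 / real d' powr (1/3)) * (real (deg GX x) / 2)
                       \<le> real (deg (bip_sub GX X' X'') x)
                     \<and> real (deg (bip_sub GX X' X'') x)
                       \<le> (1 + 2 / real d' powr (1/3)) * (real (deg GX x) / 2)) \<and>
           d_good (real d / 5) Y H X' X'')"
    if dd: "d \<ge> 10^12" for d :: nat
  proof (intro allI impI)
    fix \<epsilon> :: real and d' n :: nat and X Y :: "nat set" and H GX :: "nat \<Rightarrow> nat \<Rightarrow> bool"
    assume eps1: "0 < \<epsilon>" and eps2: "\<epsilon> \<le> 5/8" and d'1: "2^18 \<le> d'" and d'2: "d' \<le> d"
      and n0: "n > 0" and ev: "even n" and bal: "balanced_bipartite_on n X Y H"
      and hdeg: "\<forall>v \<in> {1..n}. real d / 2 - real d powr (2/3) \<le> real (deg H v)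
                        \<and> real (deg H v) \<le> real d / 2 + real d powr (2/3)"
      and GXs: "simple_graph_on X GX"
      and gdeg: "\<forall>x \<in> X. (1 - \<epsilon>) * real d' \<le> real (deg GX x) \<and> real (deg GX x) \<le> (1 + \<epsilon>) * real d'"
    define D where "D = real d"
    define q where "q = real d' powr (1/3)"
    have D: "D \<ge> 10^12" using dd by (simp add: D_def)
    have Hg: "simple_graph_on {1..n} H" and XYu: "X \<union> Y = {1..n}" and XY: "X \<inter> Y = {}"
      and HXY: "\<forall>u v. H u v \<longrightarrow> (u \<in> X \<and> v \<in> Y) \<or> (u \<in> Y \<and> v \<in> X)"
      using bal by (auto simp: balanced_bipartite_on_def)
    have Hs: "\<forall>u v. H u v \<longrightarrow> H v u" and Hin: "\<forall>u v. H u v \<longrightarrow> u \<in> {1..n} \<and> v \<in> {1..n}"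
      using Hg by (auto simp: simple_graph_on_def)
    have finX: "finite X" and finY: "finite Y"
      using XYu by (metis finite_Un finite_atLeastAtMost)+
    obtain e where e: "bij_betw e {0..<card X} X" using ex_bij_betw_nat_finite[OF finX] by blast
    interpret pairing X "card X" e by unfold_locales (rule e)
    have dq: "real d' = q^3" unfolding q_def by (rule cube_powr[symmetric]) simp
    have q: "q \<ge> 64"
    proof (rule cube_ge)
      show "0 \<le> q" by (simp add: q_def)
      show "(64::real)^3 \<le> q^3" using d'1 dq by simp
    qed simp
    define t where "t = D powr (1/3)"
    have tD: "t^3 = D" unfolding t_def by (rule cube_powr) (use D in simp)
    have t: "t \<ge> 10^4"
    proof (rule cube_ge)
      show "0 \<le> t" by (simp add: t_def)
      show "((10::real)^4)^3 \<le> t^3" using D tD by simp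
    qed simp
    have D23: "D powr (2/3) \<le> D/10^4"
    proof -
      have "D powr (2/3) = t^2" unfolding t_def by (rule sq_powr) (use D in simp)
      also have "t^2 = D / t" using tD t by (simp add: field_simps power3_eq_cube power2_eq_square)
      also have "D / t \<le> D / 10^4" using t D by (intro divide_left_mono) auto
      finally show ?thesis .
    qed
    have degH: "\<forall>v \<in> X \<union> Y. D/2 - D/10^4 \<le> real (deg H v) \<and> real (deg H v) \<le> D/2 + D/10^4"
      using hdeg XYu D23 unfolding D_def by force
    have finH: "\<forall>v. finite (nbhd H v)"
    proof
      fix v
      have "nbhd H v \<subseteq> {1..n}" using Hin by (auto simp: nbhd_def)
      thus "finite (nbhd H v)" by (rule finite_subset) simp
    qed
    have dD: "real d' \<le> D" using d'2 by (simp add: D_def)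
    show "\<exists>X' X''. X' \<union> X'' = X \<and> X' \<inter> X'' = {} \<and>
           (\<forall>x \<in> X. (1 - 2 / real d' powr (1/3)) * (real (deg GX x) / 2)
                       \<le> real (deg (bip_sub GX X' X'') x)
                     \<and> real (deg (bip_sub GX X' X'') x)
                       \<le> (1 + 2 / real d' powr (1/3)) * (real (deg GX x) / 2)) \<and>
           d_good (real d / 5) Y H X' X''"
      using main[OF D q dq dD eps1 eps2 XY finY Hs HXY degH finH GXs gdeg]
      unfolding q_def D_def .
  qed
  show ?thesis
    by (rule exI[of _ "10^12"]) (use main' in auto)
qed

end
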